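(* (Positive/negative transfer for large first task.) Fix $\rho$ and $N_B$. Then \[ \lim_{N_A\to\infty}E_{A\to B}(\rho)=2(1-\rho)E_B, \] so for $N_A\gg N_B$, $E_{A\to B}(\rho)<E_B$ when $\rho>1/2$ and $E_{A\to B}(\rho)>E_B$ when $\rho<1/2$.
   Context: $\eta_i\ge0$, $\sum_i\eta_i<\infty$, infinitely many $\eta_i>0$. For sample size $N$: $\kappa>0$ solves $1=\sum_i\eta_i/(\kappa+N\eta_i)$, $\gamma=\sum_iN\eta_i^2/(\kappa+N\eta_i)^2$, $q_i=\kappa/(\kappa+N\eta_i)$; subscripts $A,B$ mean $N=N_A,N_B$. $E_{B,i}=q_{B,i}^2\eta_i^2/(1-\gamma_B)$, $E_B=\sum_iE_{B,i}$, and $E_{A\to B}(\rho)=\sum_i[2(1-\rho)(1-q_{A,i})+q_{A,i}^2/(1-\gamma_A)]E_{B,i}$ (replica-method error on task B after sequential training A→B in the noise-free case). *)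

theory Defs
  imports "HOL-Analysis.Analysis"
begin

definition kappa :: "(nat \<Rightarrow> real) \<Rightarrow> nat \<Rightarrow> real" where
  "kappa \<eta> N = (THE \<kappa>. \<kappa> > 0 \<and> (\<Sum>i. \<eta> i / (\<kappa> + real N * \<eta> i)) = 1)"

definition gamma :: "(nat \<Rightarrow> real) \<Rightarrow> nat \<Rightarrow> real" where
  "gamma \<eta> N = (\<Sum>i. real N * (\<eta> i)\<^sup>2 / (kappa \<eta> N + real N * \<eta> i)\<^sup>2)"

definition qf :: "(nat \<Rightarrow> real) \<Rightarrow> nat \<Rightarrow> nat \<Rightarrow> real" where
  "qf \<eta> N i = kappa \<eta> N / (kappa \<eta> N + real N * \<eta> i)"

definition E_i :: "(nat \<Rightarrow> real) \<Rightarrow> nat \<Rightarrow> nat \<Rightarrow> real" where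
  "E_i \<eta> NB i = (qf \<eta> NB i)\<^sup>2 * (\<eta> i)\<^sup>2 / (1 - gamma \<eta> NB)"

definition E_single :: "(nat \<Rightarrow> real) \<Rightarrow> nat \<Rightarrow> real" where
  "E_single \<eta> NB = (\<Sum>i. E_i \<eta> NB i)"

definition E_seq :: "(nat \<Rightarrow> real) \<Rightarrow> nat \<Rightarrow> nat \<Rightarrow> real \<Rightarrow> real" where
  "E_seq \<eta> NA NB \<rho> = (\<Sum>i. (2 * (1 - \<rho>) * (1 - qf \<eta> NA i)
       + (qf \<eta> NA i)\<^sup>2 / (1 - gamma \<eta> NA)) * E_i \<eta> NB i)"

end

theory Submission
  imports Defs "HOL-Real_Asymp.Real_Asymp"
begin


lemma term_summ:
  fixes e :: "nat \<Rightarrow> real"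
  assumes nn: "\<And>i. e i \<ge> 0" and sm: "summable e" and k: "k > 0"
  shows "summable (\<lambda>i. e i / (k + real N * e i))"
proof (rule summable_comparison_test'[where g="\<lambda>i. e i / k" and N=0])
  show "summable (\<lambda>i. e i / k)" using sm by (simp add: summable_divide)
  fix i
  have "k \<le> k + real N * e i" using nn[of i] by simp
  then show "norm (e i / (k + real N * e i)) \<le> e i / k"
    using nn[of i] k by (simp add: frac_le)
qed

lemma F_strict_mono:
  fixes e :: "nat \<Rightarrow> real"
  assumes nn: "\<And>i. e i \<ge> 0" and sm: "summable e" and inf: "infinite {i. e i > 0}"
    and a: "0 < a" and ab: "a < b"
  shows "(\<Sum>i. e i / (b + real N * e i)) < (\<Sum>i. e i / (a + real N * e i))"
proof -
  have sa: "summable (\<lambda>i. e i / (a + real N * e i))" using term_summ[OF nn sm a] .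
  have sb: "summable (\<lambda>i. e i / (b + real N * e i))" using term_summ[OF nn sm] a ab by simp
  have pa: "a + real N * e i > 0" for i using nn[of i] a by (simp add: add_pos_nonneg)
  have pb: "b + real N * e i > 0" for i using nn[of i] a ab by (simp add: add_pos_nonneg)
  have le: "e i / (b + real N * e i) \<le> e i / (a + real N * e i)" for i
    using nn[of i] a ab pa[of i] pb[of i] by (intro divide_left_mono) auto
  obtain j where j: "e j > 0" using inf not_finite_existsD by auto
  have lt: "e j / (b + real N * e j) < e j / (a + real N * e j)"
    using j a ab pa[of j] pb[of j] by (intro divide_strict_left_mono) auto
  have "0 < (\<Sum>i. e i / (a + real N * e i) - e i / (b + real N * e i))"
    using lt le by (subst suminf_pos_iff) (auto intro!: summable_diff sa sb)
  then show ?thesis using suminf_diff[OF sa sb] by simp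
qed

lemma F_exists:
  fixes e :: "nat \<Rightarrow> real"
  assumes nn: "\<And>i. e i \<ge> 0" and sm: "summable e" and inf: "infinite {i. e i > 0}"
  shows "\<exists>k>0. (\<Sum>i. e i / (k + real N * e i)) = 1"
proof -
  obtain S where S: "finite S" "card S = N + 2" "S \<subseteq> {i. e i > 0}"
    using infinite_arbitrarily_large[OF inf] by blast
  have Sne: "S \<noteq> {}" using S by auto
  define k0 where "k0 = Min (e ` S)"
  have k0pos: "k0 > 0" unfolding k0_def using S Sne by (subst Min_gr_iff) auto
  have k0le: "k0 \<le> e i" if "i \<in> S" for i unfolding k0_def using S that by auto
  define k1 where "k1 = k0 + suminf e + 1"
  have se: "suminf e \<ge> 0" using suminf_nonneg[OF sm nn] .
  have k01: "k0 \<le> k1" using se by (simp add: k1_def)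
  define F where "F = (\<lambda>k. \<Sum>i. e i / (k + real N * e i))"
  have "F k0 \<ge> (\<Sum>i\<in>S. e i / (k0 + real N * e i))"
    unfolding F_def using term_summ[OF nn sm k0pos] S nn k0pos
    by (intro sum_le_suminf) (auto intro!: divide_nonneg_pos add_pos_nonneg)
  moreover have "(\<Sum>i\<in>S. e i / (k0 + real N * e i)) \<ge> (\<Sum>i\<in>S. 1 / (real N + 1))"
  proof (rule sum_mono)
    fix i assume i: "i \<in> S"
    have ei: "e i > 0" using i S by auto
    have "k0 + real N * e i \<le> (real N + 1) * e i" using k0le[OF i] by (simp add: algebra_simps)
    then show "1 / (real N + 1) \<le> e i / (k0 + real N * e i)"
      using ei k0pos by (simp add: divide_simps add_pos_nonneg mult.commute)
  qed
  moreover have "(\<Sum>i\<in>S. 1 / (real N + 1)) = (real N + 2) / (real N + 1)" using S by simp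
  moreover have "(real N + 2) / (real N + 1) > 1" by simp
  ultimately have Fk0: "F k0 \<ge> 1" by linarith
  have k1pos: "k1 > 0" using k0pos k01 by linarith
  have "F k1 \<le> (\<Sum>i. e i / k1)" unfolding F_def
    using term_summ[OF nn sm k1pos] sm nn k1pos
    by (intro suminf_le) (auto intro!: divide_left_mono summable_divide mult_pos_pos add_pos_nonneg)
  also have "\<dots> = suminf e / k1" using suminf_divide[OF sm] by simp
  also have "\<dots> < 1" using k1pos se k0pos by (simp add: k1_def)
  finally have Fk1: "F k1 \<le> 1" by simp
  have cont: "continuous_on {k0..k1} F"
  proof (rule uniform_limit_theorem)
    show "uniform_limit {k0..k1} (\<lambda>n x. \<Sum>i<n. e i / (x + real N * e i)) F sequentially"
      unfolding F_def
    proof (rule Weierstrass_m_test[where M="\<lambda>i. e i / k0"])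
      fix n and x :: real assume x: "x \<in> {k0..k1}"
      then have "k0 \<le> x + real N * e n" using nn[of n] by (simp add: add_increasing2)
      then show "norm (e n / (x + real N * e n)) \<le> e n / k0"
        using nn[of n] k0pos by (simp add: frac_le)
    next
      show "summable (\<lambda>i. e i / k0)" using sm by (simp add: summable_divide)
    qed
    show "\<forall>\<^sub>F n in sequentially. continuous_on {k0..k1} (\<lambda>x. \<Sum>i<n. e i / (x + real N * e i))"
      using k0pos nn
      by (intro always_eventually allI continuous_intros)
        (auto, metis add_pos_nonneg le_less_trans less_le mult_nonneg_nonneg of_nat_0_le_iff)
  qed simp
  obtain k where "k0 \<le> k" "k \<le> k1" "F k = 1" using IVT2'[OF Fk1 Fk0 k01 cont] by blast
  then show ?thesis using k0pos unfolding F_def by (intro exI[of _ k]) auto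
qed

lemma kappa_props:
  fixes e :: "nat \<Rightarrow> real"
  assumes nn: "\<And>i. e i \<ge> 0" and sm: "summable e" and inf: "infinite {i. e i > 0}"
  shows "kappa e N > 0 \<and> (\<Sum>i. e i / (kappa e N + real N * e i)) = 1"
proof -
  have "\<exists>!k. k > 0 \<and> (\<Sum>i. e i / (k + real N * e i)) = 1"
  proof (rule ex_ex1I)
    show "\<exists>k. k > 0 \<and> (\<Sum>i. e i / (k + real N * e i)) = 1" using F_exists[OF nn sm inf] by blast
  next
    fix a b assume a: "a > 0 \<and> (\<Sum>i. e i / (a + real N * e i)) = 1"
      and b: "b > 0 \<and> (\<Sum>i. e i / (b + real N * e i)) = 1"
    show "a = b"
    proof (rule ccontr)
      assume "a \<noteq> b"
      then consider "a < b" | "b < a" by linarith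
      then show False
        using F_strict_mono[OF nn sm inf, of a b N] F_strict_mono[OF nn sm inf, of b a N] a b by auto
    qed
  qed
  then show ?thesis unfolding kappa_def by (rule theI')
qed



lemma gamma_props:
  fixes e :: "nat \<Rightarrow> real" and N :: nat
  assumes nn: "\<And>i. e i \<ge> 0" and sm: "summable e" and inf: "infinite {i. e i > 0}"
  defines "k \<equiv> kappa e N"
  shows "summable (\<lambda>i. k * e i / (k + real N * e i)\<^sup>2)"
    and "1 - gamma e N = (\<Sum>i. k * e i / (k + real N * e i)\<^sup>2)"
    and "1 - gamma e N > 0"
    and "\<And>i. k * e i / (k + real N * e i)\<^sup>2 \<le> 1 - gamma e N"
proof -
  have kp: "k > 0" and F1: "(\<Sum>i. e i / (k + real N * e i)) = 1"
    using kappa_props[OF nn sm inf, of N] by (auto simp: k_def)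
  have dp: "k + real N * e i > 0" for i using kp nn[of i] by (simp add: add_pos_nonneg)
  have sF: "summable (\<lambda>i. e i / (k + real N * e i))" using term_summ[OF nn sm kp] .
  show sa: "summable (\<lambda>i. k * e i / (k + real N * e i)\<^sup>2)"
  proof (rule summable_comparison_test'[where g="\<lambda>i. e i / k" and N=0])
    show "summable (\<lambda>i. e i / k)" using sm by (simp add: summable_divide)
    fix i
    have "k\<^sup>2 \<le> (k + real N * e i)\<^sup>2" using kp nn[of i] by (intro power_mono) auto
    then have "k * e i / (k + real N * e i)\<^sup>2 \<le> k * e i / k\<^sup>2"
      using kp nn[of i] dp[of i] by (intro divide_left_mono) auto
    also have "\<dots> = e i / k" using kp by (simp add: power2_eq_square)
    finally show "norm (k * e i / (k + real N * e i)\<^sup>2) \<le> e i / k"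
      using kp nn[of i] by simp
  qed
  have split: "e i / (k + real N * e i) = k * e i / (k + real N * e i)\<^sup>2 + real N * (e i)\<^sup>2 / (k + real N * e i)\<^sup>2" for i
  proof -
    have "k * e i / (k + real N * e i)\<^sup>2 + real N * (e i)\<^sup>2 / (k + real N * e i)\<^sup>2
       = (e i * (k + real N * e i)) / ((k + real N * e i) * (k + real N * e i))"
      by (simp add: power2_eq_square add_divide_distrib[symmetric] algebra_simps)
    also have "\<dots> = e i / (k + real N * e i)" using dp[of i] by simp
    finally show ?thesis by simp
  qed
  have sb: "summable (\<lambda>i. real N * (e i)\<^sup>2 / (k + real N * e i)\<^sup>2)"
  proof -
    have "summable (\<lambda>i. e i / (k + real N * e i) - k * e i / (k + real N * e i)\<^sup>2)"
      using sF sa by (rule summable_diff)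
    then show ?thesis by (subst (asm) split) simp
  qed
  have "1 = (\<Sum>i. k * e i / (k + real N * e i)\<^sup>2) + (\<Sum>i. real N * (e i)\<^sup>2 / (k + real N * e i)\<^sup>2)"
    using F1 suminf_add[OF sa sb] split by simp
  moreover have "gamma e N = (\<Sum>i. real N * (e i)\<^sup>2 / (k + real N * e i)\<^sup>2)"
    unfolding gamma_def k_def ..
  ultimately show eq: "1 - gamma e N = (\<Sum>i. k * e i / (k + real N * e i)\<^sup>2)" by simp
  obtain j where j: "e j > 0" using inf not_finite_existsD by auto
  show "1 - gamma e N > 0" unfolding eq
    using sa nn kp j dp[of j] by (subst suminf_pos_iff) (auto intro!: exI[of _ j] divide_pos_pos)
  fix i
  have "sum (\<lambda>i. k * e i / (k + real N * e i)\<^sup>2) {i} \<le> (\<Sum>i. k * e i / (k + real N * e i)\<^sup>2)"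
    using sa nn kp by (intro sum_le_suminf) auto
  then show "k * e i / (k + real N * e i)\<^sup>2 \<le> 1 - gamma e N" unfolding eq by simp
qed

lemma kappa_tendsto:
  fixes e :: "nat \<Rightarrow> real"
  assumes nn: "\<And>i. e i \<ge> 0" and sm: "summable e" and inf: "infinite {i. e i > 0}"
  shows "(\<lambda>N. kappa e N) \<longlonglongrightarrow> 0"
proof (rule order_tendstoI)
  fix a :: real assume "a < 0"
  then show "\<forall>\<^sub>F N in sequentially. a < kappa e N"
    using kappa_props[OF nn sm inf] by (auto intro: always_eventually less_trans)
next
  fix eps :: real assume ep: "0 < eps"
  have T: "(\<forall>\<^sub>F N in sequentially. summable (\<lambda>i. norm (e i / (eps + real N * e i)))) \<and>
     summable (\<lambda>i. norm (0::real)) \<and> ((\<lambda>N. \<Sum>i. e i / (eps + real N * e i)) \<longlongrightarrow> (\<Sum>i. (0::real))) sequentially"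
  proof (rule tannerys_theorem[where M="\<lambda>i. e i / eps"])
    fix i
    show "(\<lambda>N. e i / (eps + real N * e i)) \<longlonglongrightarrow> 0"
    proof (cases "e i = 0")
      case True then show ?thesis by simp
    next
      case False
      then have "e i > 0" using nn[of i] by simp
      then show ?thesis using ep by real_asymp
    qed
  next
    show "\<forall>\<^sub>F (i, N) in at_top \<times>\<^sub>F sequentially. norm (e i / (eps + real N * e i)) \<le> e i / eps"
    proof (rule always_eventually, safe)
      fix i N
      have "eps \<le> eps + real N * e i" using nn[of i] by simp
      then show "norm (e i / (eps + real N * e i)) \<le> e i / eps"
        using nn[of i] ep by (simp add: frac_le)
    qed
    show "summable (\<lambda>i. e i / eps)" using sm by (simp add: summable_divide)
  qed simp
  then have lim: "(\<lambda>N. \<Sum>i. e i / (eps + real N * e i)) \<longlonglongrightarrow> 0" by simp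
  then have "\<forall>\<^sub>F N in sequentially. (\<Sum>i. e i / (eps + real N * e i)) < 1"
    by (intro order_tendstoD) auto
  then show "\<forall>\<^sub>F N in sequentially. kappa e N < eps"
  proof eventually_elim
    case (elim N)
    show ?case
    proof (rule ccontr)
      assume "\<not> kappa e N < eps"
      then consider "kappa e N = eps" | "eps < kappa e N" by linarith
      then show False
        using F_strict_mono[OF nn sm inf ep, of "kappa e N" N] kappa_props[OF nn sm inf, of N] elim
        by cases auto
    qed
  qed
qed



lemma q_props:
  fixes e :: "nat \<Rightarrow> real"
  assumes nn: "\<And>i. e i \<ge> 0" and sm: "summable e" and inf: "infinite {i. e i > 0}"
  shows "0 < qf e N i \<and> qf e N i \<le> 1"
proof -
  have kp: "kappa e N > 0" using kappa_props[OF nn sm inf] by blast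
  have "kappa e N \<le> kappa e N + real N * e i" using nn[of i] by simp
  then show ?thesis unfolding qf_def using kp by (simp add: divide_le_eq_1 add_pos_nonneg nn)
qed

lemma Ei_props:
  fixes e :: "nat \<Rightarrow> real"
  assumes nn: "\<And>i. e i \<ge> 0" and sm: "summable e" and inf: "infinite {i. e i > 0}"
  shows "0 \<le> E_i e NB i" "E_i e NB i \<le> (e i)\<^sup>2 / (1 - gamma e NB)"
    "e i > 0 \<Longrightarrow> E_i e NB i > 0" "e i = 0 \<Longrightarrow> E_i e NB i = 0"
proof -
  have g: "1 - gamma e NB > 0" using gamma_props(3)[OF nn sm inf] .
  have q: "0 < qf e NB i" "qf e NB i \<le> 1" using q_props[OF nn sm inf] by auto
  show "0 \<le> E_i e NB i" unfolding E_i_def using g by simp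
  have "(qf e NB i)\<^sup>2 * (e i)\<^sup>2 \<le> 1 * (e i)\<^sup>2"
    using q by (intro mult_right_mono) (auto simp: power_le_one)
  then show "E_i e NB i \<le> (e i)\<^sup>2 / (1 - gamma e NB)" unfolding E_i_def using g
    by (simp add: divide_right_mono)
  show "e i > 0 \<Longrightarrow> E_i e NB i > 0" unfolding E_i_def using g q by simp
  show "e i = 0 \<Longrightarrow> E_i e NB i = 0" unfolding E_i_def by simp
qed

lemma Ei_summable:
  fixes e :: "nat \<Rightarrow> real"
  assumes nn: "\<And>i. e i \<ge> 0" and sm: "summable e" and inf: "infinite {i. e i > 0}"
  shows "summable (E_i e NB)"
proof -
  have "summable (\<lambda>i. (e i)\<^sup>2)"
  proof -
    have "e \<longlonglongrightarrow> 0" using summable_LIMSEQ_zero[OF sm] .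
    then have "eventually (\<lambda>i. e i < 1) sequentially" by (intro order_tendstoD) auto
    then obtain M where M: "\<And>i. i \<ge> M \<Longrightarrow> e i < 1" by (auto simp: eventually_sequentially)
    show ?thesis
    proof (rule summable_comparison_test'[OF sm, of M])
      fix i assume "i \<ge> M"
      then have "e i < 1" by (rule M)
      then show "norm ((e i)\<^sup>2) \<le> e i" using nn[of i]
        by (simp add: power2_eq_square mult_left_le_one_le)
    qed
  qed
  then have "summable (\<lambda>i. (e i)\<^sup>2 / (1 - gamma e NB))" by (rule summable_divide)
  then show ?thesis
    by (rule summable_comparison_test'[where N=0]) (use Ei_props[OF nn sm inf] in auto)
qed

lemma t2_bound:
  fixes e :: "nat \<Rightarrow> real"
  assumes nn: "\<And>i. e i \<ge> 0" and sm: "summable e" and inf: "infinite {i. e i > 0}"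
  shows "0 \<le> (qf e NA i)\<^sup>2 / (1 - gamma e NA) * E_i e NB i"
    "(qf e NA i)\<^sup>2 / (1 - gamma e NA) * E_i e NB i \<le> kappa e NA * e i / (1 - gamma e NB)"
proof -
  have gA: "1 - gamma e NA > 0" using gamma_props(3)[OF nn sm inf] .
  have gB: "1 - gamma e NB > 0" using gamma_props(3)[OF nn sm inf] .
  have E0: "0 \<le> E_i e NB i" using Ei_props[OF nn sm inf] by blast
  show "0 \<le> (qf e NA i)\<^sup>2 / (1 - gamma e NA) * E_i e NB i" using gA E0 by simp
  have kp: "kappa e NA > 0" using kappa_props[OF nn sm inf] by blast
  show "(qf e NA i)\<^sup>2 / (1 - gamma e NA) * E_i e NB i \<le> kappa e NA * e i / (1 - gamma e NB)"
  proof (cases "e i = 0")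
    case True then show ?thesis using Ei_props(4)[OF nn sm inf] by simp
  next
    case False
    then have ep: "e i > 0" using nn[of i] by simp
    define k where "k = kappa e NA"
    define d where "d = k + real NA * e i"
    define G where "G = 1 - gamma e NA"
    have kp': "k > 0" using kp k_def by simp
    have dp: "d > 0" using kp' nn[of i] by (simp add: d_def add_pos_nonneg)
    have Gp: "G > 0" using gA G_def by simp
    have h: "k * e i / d\<^sup>2 \<le> G" using gamma_props(4)[OF nn sm inf, of NA i] by (simp add: k_def d_def G_def)
    have q2: "(qf e NA i)\<^sup>2 / G = k * (k * e i / d\<^sup>2) / (e i * G)"
      unfolding qf_def k_def[symmetric] d_def[symmetric] using ep Gp dp
      by (simp add: power2_eq_square field_simps)
    also have "\<dots> \<le> k * G / (e i * G)" using h kp' ep Gp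
      by (intro divide_right_mono mult_left_mono) auto
    also have "\<dots> = k / e i" using Gp by simp
    finally have q2le: "(qf e NA i)\<^sup>2 / G \<le> k / e i" .
    have "(qf e NA i)\<^sup>2 / G * E_i e NB i \<le> k / e i * ((e i)\<^sup>2 / (1 - gamma e NB))"
      using q2le Ei_props(2)[OF nn sm inf, of NB i] E0 kp' ep
      by (intro mult_mono) auto
    also have "\<dots> = k * e i / (1 - gamma e NB)" using ep by (simp add: power2_eq_square)
    finally show ?thesis by (simp add: k_def G_def)
  qed
qed



theorem mainTheorem7:
  fixes \<eta> :: "nat \<Rightarrow> real" and \<rho> :: real and NB :: nat
  assumes "\<And>i. \<eta> i \<ge> 0"
    and "summable \<eta>"
    and "infinite {i. \<eta> i > 0}"
  shows "((\<lambda>NA. E_seq \<eta> NA NB \<rho>) \<longlongrightarrow> 2 * (1 - \<rho>) * E_single \<eta> NB) sequentially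
    \<and> (\<rho> > 1/2 \<longrightarrow> eventually (\<lambda>NA. E_seq \<eta> NA NB \<rho> < E_single \<eta> NB) sequentially)
    \<and> (\<rho> < 1/2 \<longrightarrow> eventually (\<lambda>NA. E_seq \<eta> NA NB \<rho> > E_single \<eta> NB) sequentially)"
proof -
  note nn = assms(1) and sm = assms(2) and inf = assms(3)
  define e where "e = \<eta>"
  have nn': "\<And>i. e i \<ge> 0" and sm': "summable e" and inf': "infinite {i. e i > 0}"
    using nn sm inf by (auto simp: e_def)
  define cB where "cB = 1 - gamma e NB"
  have cBp: "cB > 0" using gamma_props(3)[OF nn' sm' inf'] cB_def by simp
  define a where "a = (\<lambda>i NA. (2 * (1 - \<rho>) * (1 - qf e NA i)
       + (qf e NA i)\<^sup>2 / (1 - gamma e NA)) * E_i e NB i)"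
  have sE: "summable (E_i e NB)" using Ei_summable[OF nn' sm' inf'] .
  have klim: "(\<lambda>N. kappa e N) \<longlonglongrightarrow> 0" using kappa_tendsto[OF nn' sm' inf'] .
  have T: "(\<forall>\<^sub>F NA in sequentially. summable (\<lambda>i. norm (a i NA))) \<and>
     summable (\<lambda>i. norm (2 * (1 - \<rho>) * E_i e NB i)) \<and>
     ((\<lambda>NA. \<Sum>i. a i NA) \<longlongrightarrow> (\<Sum>i. 2 * (1 - \<rho>) * E_i e NB i)) sequentially"
  proof (rule tannerys_theorem[where M="\<lambda>i. \<bar>2 * (1 - \<rho>)\<bar> * E_i e NB i + e i / cB"])
    fix i
    show "((\<lambda>NA. a i NA) \<longlongrightarrow> 2 * (1 - \<rho>) * E_i e NB i) sequentially"
    proof (cases "e i = 0")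
      case True then show ?thesis using Ei_props(4)[OF nn' sm' inf'] by (simp add: a_def)
    next
      case False
      then have ep: "e i > 0" using nn'[of i] by simp
      have qlim: "(\<lambda>NA. qf e NA i) \<longlonglongrightarrow> 0"
      proof (rule tendsto_sandwich[where f="\<lambda>_. 0" and h="\<lambda>NA. kappa e NA / e i"])
        show "\<forall>\<^sub>F n in sequentially. 0 \<le> qf e n i"
          using q_props[OF nn' sm' inf'] by (auto intro: always_eventually less_imp_le)
        show "\<forall>\<^sub>F n in sequentially. qf e n i \<le> kappa e n / e i"
          unfolding eventually_sequentially
        proof (intro exI[of _ 1] allI impI)
          fix n :: nat assume n: "1 \<le> n"
          have kp: "kappa e n > 0" using kappa_props[OF nn' sm' inf'] by blast
          have "e i \<le> real n * e i" using n ep by simp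
          also have "\<dots> \<le> kappa e n + real n * e i" using kp by simp
          finally have "e i \<le> kappa e n + real n * e i" .
          then show "qf e n i \<le> kappa e n / e i" unfolding qf_def using kp ep
            by (intro divide_left_mono) auto
        qed
        show "(\<lambda>NA. kappa e NA / e i) \<longlonglongrightarrow> 0"
        proof -
          have "(\<lambda>NA. kappa e NA / e i) \<longlonglongrightarrow> 0 / e i"
            using ep by (intro tendsto_intros klim) auto
          then show ?thesis by simp
        qed
      qed simp
      have t2lim: "(\<lambda>NA. (qf e NA i)\<^sup>2 / (1 - gamma e NA) * E_i e NB i) \<longlonglongrightarrow> 0"
      proof (rule tendsto_sandwich[where f="\<lambda>_. 0" and h="\<lambda>NA. kappa e NA * e i / cB"])
        show "\<forall>\<^sub>F n in sequentially. 0 \<le> (qf e n i)\<^sup>2 / (1 - gamma e n) * E_i e NB i"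
          using t2_bound(1)[OF nn' sm' inf'] by (auto intro: always_eventually)
        show "\<forall>\<^sub>F n in sequentially. (qf e n i)\<^sup>2 / (1 - gamma e n) * E_i e NB i \<le> kappa e n * e i / cB"
          using t2_bound(2)[OF nn' sm' inf'] by (auto intro: always_eventually simp: cB_def)
        show "(\<lambda>NA. kappa e NA * e i / cB) \<longlonglongrightarrow> 0"
        proof -
          have "(\<lambda>NA. kappa e NA * e i / cB) \<longlonglongrightarrow> 0 * e i / cB"
            using cBp by (intro tendsto_intros klim) auto
          then show ?thesis by simp
        qed
      qed simp
      have "(\<lambda>NA. 2 * (1 - \<rho>) * (1 - qf e NA i) * E_i e NB i
           + (qf e NA i)\<^sup>2 / (1 - gamma e NA) * E_i e NB i) \<longlonglongrightarrow> 2 * (1 - \<rho>) * (1 - 0) * E_i e NB i + 0"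
        by (intro tendsto_intros qlim t2lim)
      then show ?thesis by (simp add: a_def algebra_simps)
    qed
  next
    have ev: "\<forall>\<^sub>F NA in sequentially. kappa e NA < 1" using klim by (intro order_tendstoD) auto
    have "\<forall>\<^sub>F (i::nat, NA) in at_top \<times>\<^sub>F sequentially. True \<and> kappa e NA < 1"
    proof -
      have "\<forall>\<^sub>F x in (at_top::nat filter) \<times>\<^sub>F sequentially. kappa e (snd x) < 1"
        using eventually_prodI[OF always_eventually ev, of "\<lambda>_. True"] by simp
      then show ?thesis by (rule eventually_mono) auto
    qed
    then show "\<forall>\<^sub>F (i, NA) in at_top \<times>\<^sub>F sequentially. norm (a i NA) \<le> \<bar>2 * (1 - \<rho>)\<bar> * E_i e NB i + e i / cB"
    proof (rule eventually_mono, safe)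
      fix i NA assume k1: "kappa e NA < 1"
      have q: "0 < qf e NA i" "qf e NA i \<le> 1" using q_props[OF nn' sm' inf'] by auto
      have E0: "E_i e NB i \<ge> 0" using Ei_props(1)[OF nn' sm' inf'] .
      have t0: "0 \<le> (qf e NA i)\<^sup>2 / (1 - gamma e NA) * E_i e NB i"
        using t2_bound(1)[OF nn' sm' inf'] .
      have t1: "(qf e NA i)\<^sup>2 / (1 - gamma e NA) * E_i e NB i \<le> kappa e NA * e i / cB"
        using t2_bound(2)[OF nn' sm' inf'] by (simp add: cB_def)
      have "kappa e NA * e i / cB \<le> 1 * e i / cB"
        using k1 nn'[of i] cBp by (intro divide_right_mono mult_right_mono) auto
      with t1 have t1': "(qf e NA i)\<^sup>2 / (1 - gamma e NA) * E_i e NB i \<le> e i / cB" by simp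
      have "\<bar>2 * (1 - \<rho>) * (1 - qf e NA i) * E_i e NB i\<bar> \<le> \<bar>2 * (1 - \<rho>)\<bar> * E_i e NB i"
      proof -
        have "\<bar>2 * (1 - \<rho>) * (1 - qf e NA i) * E_i e NB i\<bar> = \<bar>2 * (1 - \<rho>)\<bar> * E_i e NB i * (1 - qf e NA i)"
          using q E0 by (simp add: abs_mult)
        also have "\<dots> \<le> \<bar>2 * (1 - \<rho>)\<bar> * E_i e NB i * 1"
          using q E0 by (intro mult_left_mono) auto
        finally show ?thesis by simp
      qed
      then have "\<bar>2 * (1 - \<rho>) * (1 - qf e NA i) * E_i e NB i
           + (qf e NA i)\<^sup>2 / (1 - gamma e NA) * E_i e NB i\<bar> \<le> \<bar>2 * (1 - \<rho>)\<bar> * E_i e NB i + e i / cB"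
        using t0 t1' by linarith
      then show "norm (a i NA) \<le> \<bar>2 * (1 - \<rho>)\<bar> * E_i e NB i + e i / cB"
        by (simp add: a_def distrib_right)
    qed
  next
    show "summable (\<lambda>i. \<bar>2 * (1 - \<rho>)\<bar> * E_i e NB i + e i / cB)"
      using sE sm' by (intro summable_add summable_mult summable_divide)
  qed simp
  have Eeq: "E_single e NB = (\<Sum>i. E_i e NB i)" unfolding E_single_def ..
  have lim: "((\<lambda>NA. E_seq e NA NB \<rho>) \<longlongrightarrow> 2 * (1 - \<rho>) * E_single e NB) sequentially"
    using T suminf_mult[OF sE, of "2 * (1 - \<rho>)"] unfolding E_seq_def Eeq a_def by simp
  obtain j where j: "e j > 0" using inf' not_finite_existsD by auto
  have Epos: "E_single e NB > 0" unfolding Eeq using sE Ei_props[OF nn' sm' inf'] j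
    by (subst suminf_pos_iff) (auto intro!: exI[of _ j])
  have A: "\<rho> > 1/2 \<longrightarrow> eventually (\<lambda>NA. E_seq e NA NB \<rho> < E_single e NB) sequentially"
  proof
    assume "\<rho> > 1/2"
    then have "2 * (1 - \<rho>) * E_single e NB < 1 * E_single e NB" using Epos
      by (intro mult_strict_right_mono) auto
    then have "2 * (1 - \<rho>) * E_single e NB < E_single e NB" by simp
    then show "eventually (\<lambda>NA. E_seq e NA NB \<rho> < E_single e NB) sequentially"
      using lim by (rule order_tendstoD(2)[rotated])
  qed
  have B: "\<rho> < 1/2 \<longrightarrow> eventually (\<lambda>NA. E_seq e NA NB \<rho> > E_single e NB) sequentially"
  proof
    assume "\<rho> < 1/2"
    then have "1 * E_single e NB < 2 * (1 - \<rho>) * E_single e NB" using Epos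
      by (intro mult_strict_right_mono) auto
    then have "2 * (1 - \<rho>) * E_single e NB > E_single e NB" by simp
    then show "eventually (\<lambda>NA. E_seq e NA NB \<rho> > E_single e NB) sequentially"
      using lim by (rule order_tendstoD(1)[rotated])
  qed
  show ?thesis using lim A B by (simp add: e_def)
qed


end
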